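(* Assume $\mathcal{T}$ is a tree, and either (a) $\mu_{ij}=\mu_j$ for all $(i,j)\in\mathcal{E}$ and $\theta_i=0$ for all $i$, or (b) $\mu_{ij}=\mu_i$ for all $(i,j)\in\mathcal{E}$ and $\theta_i=0$ for all $i$. Then there is a constant $m_2$ such that for all measurable locally bounded functions $w_i,y_i$ ($i\in\mathcal{I}$), $z_j$ ($j\in\mathcal{J}$), $\psi_{ij}$ (with $\psi_{ij}=0$ for $i\not\sim j$) on $[0,\infty)$ satisfying $$\sum_{j\in\mathcal{J}}\mathfrak{T}_{\mu_{ij}}\psi_{ij}=w_i-\mathfrak{T}_{\theta_i}y_i\ (i\in\mathcal{I}),\quad \sum_{i\in\mathcal{I}}\psi_{ij}=-z_j\ (j\in\mathcal{J}),\quad y_i\ge0,\ z_j\ge0,\quad \min(e\cdot y(t),e\cdot z(t))=0,$$ we have $\|y(t)\|+\|z(t)\|\le m_2(1+t)^{m_2}\|w\|_t^*$ for all $t\ge0$.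
   Context: $\mathcal{I}=\{1,\dots,I\}$, $\mathcal{J}=\{I+1,\dots,I+J\}$, $\mathcal{E}\subset\mathcal{I}\times\mathcal{J}$, $i\sim j$ iff $(i,j)\in\mathcal{E}$; $\mathcal{T}$ is the bipartite graph with vertices $\mathcal{I}\cup\mathcal{J}$ and edges $\mathcal{E}$. Constants $\mu_{ij}>0$ for $(i,j)\in\mathcal{E}$, $\mu_{ij}=0$ otherwise, $\theta_i\ge0$. $\mathfrak{J}f(t)=\int_0^tf(s)ds$, $\mathfrak{T}_\alpha f=f+\alpha\mathfrak{J}f$. $\|a\|=\sum|a_k|$, $\|w\|_t^*=\sup_{0\le s\le t}\|w(s)\|$, $e=(1,\dots,1)'$. The constant $m_2$ does not depend on $t,w,y,z,\psi$. *)

theory Defs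
  imports "HOL-Analysis.Analysis"
begin

definition Iset :: "nat \<Rightarrow> nat set" where "Iset I = {1..I}"
definition Jset :: "nat \<Rightarrow> nat \<Rightarrow> nat set" where "Jset I J = {I+1..I+J}"

definition adj :: "(nat \<times> nat) set \<Rightarrow> nat \<Rightarrow> nat \<Rightarrow> bool" where
  "adj E u v \<longleftrightarrow> (u, v) \<in> E \<or> (v, u) \<in> E"

definition is_walk :: "(nat \<times> nat) set \<Rightarrow> nat list \<Rightarrow> bool" where
  "is_walk E p \<longleftrightarrow> p \<noteq> [] \<and> (\<forall>k. Suc k < length p \<longrightarrow> adj E (p ! k) (p ! Suc k))"

definition graph_connected :: "nat set \<Rightarrow> (nat \<times> nat) set \<Rightarrow> bool" where
  "graph_connected V E \<longleftrightarrow>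
     (\<forall>u\<in>V. \<forall>v\<in>V. \<exists>p. is_walk E p \<and> set p \<subseteq> V \<and> hd p = u \<and> last p = v)"

definition has_cycle :: "nat set \<Rightarrow> (nat \<times> nat) set \<Rightarrow> bool" where
  "has_cycle V E \<longleftrightarrow>
     (\<exists>p. is_walk E p \<and> set p \<subseteq> V \<and> distinct p \<and> length p \<ge> 3 \<and> adj E (last p) (hd p))"

definition is_tree :: "nat set \<Rightarrow> (nat \<times> nat) set \<Rightarrow> bool" where
  "is_tree V E \<longleftrightarrow> graph_connected V E \<and> \<not> has_cycle V E"

definition Jint :: "(real \<Rightarrow> real) \<Rightarrow> real \<Rightarrow> real" where
  "Jint f t = (LBINT s=0..t. f s)"

definition Top :: "real \<Rightarrow> (real \<Rightarrow> real) \<Rightarrow> real \<Rightarrow> real" where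
  "Top \<alpha> f t = f t + \<alpha> * Jint f t"

definition meas_loc_bdd :: "(real \<Rightarrow> real) \<Rightarrow> bool" where
  "meas_loc_bdd f \<longleftrightarrow> set_borel_measurable borel {0..} f \<and> (\<forall>t\<ge>0. bounded (f ` {0..t}))"

definition supnorm :: "nat set \<Rightarrow> (nat \<Rightarrow> real \<Rightarrow> real) \<Rightarrow> real \<Rightarrow> real" where
  "supnorm A w t = (SUP s\<in>{0..t}. (\<Sum>k\<in>A. \<bar>w k s\<bar>))"

end

theory Submission
  imports Defs
begin

lemma mlb_integrable:
  assumes "meas_loc_bdd f"
  shows "f integrable_on {0..t}" "set_integrable lborel {0..t} f"
proof -
  have m: "(\<lambda>x. indicator {0..} x *\<^sub>R f x) \<in> borel_measurable lborel"
    using assms unfolding meas_loc_bdd_def set_borel_measurable_def by simp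
  show si: "set_integrable lborel {0..t} f"
  proof (cases "0 \<le> t")
    case True
    then obtain B where B: "\<And>x. x \<in> {0..t} \<Longrightarrow> norm (f x) \<le> B"
      using assms unfolding meas_loc_bdd_def bounded_iff by fastforce
    have "integrable lborel (\<lambda>x. indicator {0..t} x *\<^sub>R (indicator {0..} x *\<^sub>R f x))"
      apply (rule integrableI_bounded_set_indicator[where B=B])
      using m B True by (auto simp: indicator_def emeasure_lborel_Icc)
    moreover have "(\<lambda>x. indicator {0..t} x *\<^sub>R (indicator {0..} x *\<^sub>R f x)) = (\<lambda>x. indicator {0..t} x *\<^sub>R f x)"
      by (auto simp: indicator_def fun_eq_iff)
    ultimately show ?thesis unfolding set_integrable_def by simp
  next
    case False
    then show ?thesis unfolding set_integrable_def by simp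
  qed
  then show "f integrable_on {0..t}" by (rule set_borel_integral_eq_integral)
qed

lemma Jint_eq:
  assumes "meas_loc_bdd f" "0 \<le> t"
  shows "Jint f t = integral {0..t} f"
proof -
  have "Jint f t = (LBINT x=ereal 0..ereal t. f x)" unfolding Jint_def by (simp add: zero_ereal_def)
  also have "\<dots> = (LBINT x:{0..t}. f x)" using assms(2) by (rule interval_integral_Icc)
  also have "\<dots> = integral {0..t} f" by (rule set_borel_integral_eq_integral(2)[OF mlb_integrable(2)[OF assms(1)]])
  finally show ?thesis .
qed

lemma barrier:
  fixes f :: "real \<Rightarrow> real"
  assumes f: "f integrable_on {0..t}" and t: "0 \<le> t" and M: "0 \<le> M"
    and cond: "\<And>s. s \<in> {0..t} \<Longrightarrow> integral {0..s} f > M \<Longrightarrow> f s \<le> 0"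
  shows "integral {0..t} f \<le> M"
proof -
  define G where "G = (\<lambda>s. integral {0..s} f)"
  have cont: "continuous_on {0..t} G" unfolding G_def by (rule indefinite_integral_continuous_1[OF f])
  define S where "S = {0..t} \<inter> G -` {..M}"
  have clS: "closed S" unfolding S_def
    by (rule continuous_closed_preimage[OF cont]) auto
  have 0: "0 \<in> S" using t M by (simp add: S_def G_def)
  have bdd: "bdd_above S" unfolding S_def by (auto intro: bdd_aboveI[where M=t])
  define u where "u = Sup S"
  have uS: "u \<in> S" unfolding u_def using closed_contains_Sup[OF _ bdd clS] 0 by blast
  hence u: "0 \<le> u" "u \<le> t" "G u \<le> M" by (auto simp: S_def)
  have up: "\<And>s. s \<in> {0..t} \<Longrightarrow> s > u \<Longrightarrow> G s > M"
  proof (rule ccontr)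
    fix s assume s: "s \<in> {0..t}" "s > u" "\<not> G s > M"
    hence "s \<in> S" by (auto simp: S_def)
    hence "s \<le> u" unfolding u_def using bdd by (simp add: cSup_upper)
    thus False using s by simp
  qed
  have fi: "f integrable_on {u..t}" by (rule integrable_on_subinterval[OF f]) (use u in auto)
  have "integral {u..t} f = integral {u..t} (\<lambda>s. if s = u then 0 else f s)"
    by (rule integral_spike[where S="{u}"]) auto
  also have "\<dots> \<le> integral {u..t} (\<lambda>s. 0::real)"
  proof (rule integral_le)
    show "(\<lambda>s. if s = u then 0 else f s) integrable_on {u..t}"
      by (rule integrable_spike[OF fi, where S="{u}"]) auto
    fix x assume x: "x \<in> {u..t}"
    show "(if x = u then 0 else f x) \<le> 0"
    proof (cases "x = u")
      case False
      hence "x > u" using x by auto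
      hence "G x > M" using up x u by auto
      thus ?thesis using cond[of x] x u False by (auto simp: G_def)
    qed simp
  qed (simp add: integrable_0)
  finally have "integral {u..t} f \<le> 0" by simp
  moreover have "G u + integral {u..t} f = G t"
    unfolding G_def by (rule Henstock_Kurzweil_Integration.integral_combine) (use u f in auto)
  ultimately show ?thesis using u by (simp add: G_def)
qed

lemma finite_II[simp]: "finite (Iset I)" and finite_JJ[simp]: "finite (Jset I J)"
  by (simp_all add: Iset_def Jset_def)

lemma supnorm_ge:
  assumes "finite A" "\<forall>k\<in>A. meas_loc_bdd (w k)" "s \<in> {0..t}"
  shows "(\<Sum>k\<in>A. \<bar>w k s\<bar>) \<le> supnorm A w t"
proof -
  have "\<forall>k\<in>A. \<exists>B. \<forall>x\<in>{0..t}. \<bar>w k x\<bar> \<le> B"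
  proof
    fix k assume "k \<in> A"
    hence "bounded (w k ` {0..t})" using assms(2,3) unfolding meas_loc_bdd_def by auto
    thus "\<exists>B. \<forall>x\<in>{0..t}. \<bar>w k x\<bar> \<le> B" unfolding bounded_iff by auto
  qed
  then obtain B where B: "\<And>k x. k \<in> A \<Longrightarrow> x \<in> {0..t} \<Longrightarrow> \<bar>w k x\<bar> \<le> B k" by metis
  have "bdd_above ((\<lambda>s. \<Sum>k\<in>A. \<bar>w k s\<bar>) ` {0..t})"
    by (rule bdd_aboveI[where M="\<Sum>k\<in>A. B k"]) (auto intro!: sum_mono B)
  thus ?thesis unfolding supnorm_def using assms(3) by (rule cSUP_upper2) simp
qed

lemma supnorm_facts:
  assumes "\<forall>k\<in>Iset I. meas_loc_bdd (w k)" "s \<in> {0..t}"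
  shows "\<bar>\<Sum>k\<in>Iset I. w k s\<bar> \<le> supnorm (Iset I) w t"
    "\<And>i. i \<in> Iset I \<Longrightarrow> \<bar>w i s\<bar> \<le> supnorm (Iset I) w t"
    "0 \<le> supnorm (Iset I) w t"
proof -
  have a: "(\<Sum>k\<in>Iset I. \<bar>w k s\<bar>) \<le> supnorm (Iset I) w t"
    by (rule supnorm_ge) (use assms in auto)
  show "\<bar>\<Sum>k\<in>Iset I. w k s\<bar> \<le> supnorm (Iset I) w t"
    using a sum_abs[of "\<lambda>k. w k s" "Iset I"] by linarith
  show "\<And>i. i \<in> Iset I \<Longrightarrow> \<bar>w i s\<bar> \<le> supnorm (Iset I) w t"
    using a by (meson finite_II abs_ge_zero member_le_sum order_trans)
  show "0 \<le> supnorm (Iset I) w t" using a by (meson order_trans sum_nonneg abs_ge_zero)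
qed

lemma int_cmult: "(f::real\<Rightarrow>real) integrable_on S \<Longrightarrow> (\<lambda>x. c * f x) integrable_on S"
  using integrable_cmul[of f S c] by simp

lemma min0: "min (a::real) b = 0 \<Longrightarrow> a = 0 \<or> b = 0" by (simp add: min_def split: if_splits)

lemma caseA:
  fixes \<mu> :: "nat \<Rightarrow> nat \<Rightarrow> real" and \<nu> :: "nat \<Rightarrow> real" and \<theta> :: "nat \<Rightarrow> real"
    and w y z :: "nat \<Rightarrow> real \<Rightarrow> real" and \<psi> :: "nat \<Rightarrow> nat \<Rightarrow> real \<Rightarrow> real"
  assumes nu_pos: "\<And>j. \<nu> j > 0"
    and nuE: "\<And>i j. (i, j) \<in> E \<Longrightarrow> \<mu> i j = \<nu> j"
    and theta0: "\<forall>i\<in>Iset I. \<theta> i = 0"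
    and hw: "\<forall>i\<in>Iset I. meas_loc_bdd (w i) \<and> meas_loc_bdd (y i)"
    and hzm: "\<forall>j\<in>Jset I J. meas_loc_bdd (z j)"
    and hpm: "\<forall>i\<in>Iset I. \<forall>j\<in>Jset I J. meas_loc_bdd (\<psi> i j)"
    and hzero: "\<forall>i\<in>Iset I. \<forall>j\<in>Jset I J. (i, j) \<notin> E \<longrightarrow> (\<forall>s\<ge>0. \<psi> i j s = 0)"
    and heq: "\<forall>i\<in>Iset I. \<forall>t\<ge>0.
              (\<Sum>j\<in>Jset I J. Top (\<mu> i j) (\<psi> i j) t) = w i t - Top (\<theta> i) (y i) t"
    and hsum: "\<forall>j\<in>Jset I J. \<forall>t\<ge>0. (\<Sum>i\<in>Iset I. \<psi> i j t) = - z j t"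
    and hy: "\<forall>i\<in>Iset I. \<forall>t\<ge>0. y i t \<ge> 0"
    and hz: "\<forall>j\<in>Jset I J. \<forall>t\<ge>0. z j t \<ge> 0"
    and hmin: "\<forall>t\<ge>0. min (\<Sum>i\<in>Iset I. y i t) (\<Sum>j\<in>Jset I J. z j t) = 0"
    and T: "0 \<le> T"
  shows "(\<Sum>i\<in>Iset I. \<bar>y i T\<bar>) + (\<Sum>j\<in>Jset I J. \<bar>z j T\<bar>) \<le> 2 * (1 + T) * supnorm (Iset I) w T"
proof -
  define W where "W = supnorm (Iset I) w T"
  have wm: "\<forall>k\<in>Iset I. meas_loc_bdd (w k)" using hw by auto
  have W0: "0 \<le> W" unfolding W_def using supnorm_facts(3)[OF wm, of 0 T] T by auto
  have Wsum: "\<And>s. s \<in> {0..T} \<Longrightarrow> \<bar>\<Sum>k\<in>Iset I. w k s\<bar> \<le> W"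
    unfolding W_def using supnorm_facts(1)[OF wm] by auto
  have zint: "\<And>j s. j \<in> Jset I J \<Longrightarrow> z j integrable_on {0..s}"
    using hzm mlb_integrable by blast
  have pint: "\<And>i j s. i \<in> Iset I \<Longrightarrow> j \<in> Jset I J \<Longrightarrow> \<psi> i j integrable_on {0..s}"
    using hpm mlb_integrable by blast
  have eqs: "(\<Sum>j\<in>Jset I J. \<psi> i j s + \<nu> j * integral {0..s} (\<psi> i j)) = w i s - y i s"
    if i: "i \<in> Iset I" and s: "0 \<le> s" for i s
  proof -
    have "(\<Sum>j\<in>Jset I J. \<psi> i j s + \<nu> j * integral {0..s} (\<psi> i j))
        = (\<Sum>j\<in>Jset I J. Top (\<mu> i j) (\<psi> i j) s)"
    proof (rule sum.cong)
      fix j assume j: "j \<in> Jset I J"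
      have "\<mu> i j * integral {0..s} (\<psi> i j) = \<nu> j * integral {0..s} (\<psi> i j)"
      proof (cases "(i, j) \<in> E")
        case True thus ?thesis using nuE by simp
      next
        case False
        hence "integral {0..s} (\<psi> i j) = integral {0..s} (\<lambda>_. 0)"
          using hzero i j by (intro integral_cong) auto
        thus ?thesis by simp
      qed
      thus "\<psi> i j s + \<nu> j * integral {0..s} (\<psi> i j) = Top (\<mu> i j) (\<psi> i j) s"
        unfolding Top_def using Jint_eq[of "\<psi> i j" s] hpm i j s by auto
    qed simp
    also have "\<dots> = w i s - y i s" using heq i s theta0 by (simp add: Top_def)
    finally show ?thesis .
  qed
  have sumz: "(\<Sum>i\<in>Iset I. integral {0..s} (\<psi> i j)) = - integral {0..s} (z j)"
    if j: "j \<in> Jset I J" and s: "0 \<le> s" for j s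
  proof -
    have "(\<Sum>i\<in>Iset I. integral {0..s} (\<psi> i j)) = integral {0..s} (\<lambda>r. \<Sum>i\<in>Iset I. \<psi> i j r)"
      by (rule integral_sum[symmetric]) (use pint j in auto)
    also have "\<dots> = integral {0..s} (\<lambda>r. - z j r)"
      using hsum j by (intro integral_cong) auto
    also have "\<dots> = - integral {0..s} (z j)" by (rule integral_neg)
    finally show ?thesis .
  qed
  define g where "g = (\<lambda>r. \<Sum>j\<in>Jset I J. \<nu> j * z j r)"
  define F where "F = (\<lambda>s. \<Sum>j\<in>Jset I J. \<nu> j * integral {0..s} (z j))"
  have gint: "g integrable_on {0..s}" for s
    unfolding g_def by (intro integrable_sum int_cmult) (use zint in auto)
  have Fg: "F s = integral {0..s} g" for s
  proof -
    have "integral {0..s} g = (\<Sum>j\<in>Jset I J. integral {0..s} (\<lambda>r. \<nu> j * z j r))"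
      unfolding g_def by (rule integral_sum) (use zint in \<open>auto intro: int_cmult\<close>)
    thus ?thesis unfolding F_def by simp
  qed
  have key: "(\<Sum>i\<in>Iset I. y i s) - (\<Sum>j\<in>Jset I J. z j s) - F s = (\<Sum>i\<in>Iset I. w i s)"
    if s: "0 \<le> s" for s
  proof -
    have "(\<Sum>i\<in>Iset I. w i s - y i s)
       = (\<Sum>i\<in>Iset I. \<Sum>j\<in>Jset I J. \<psi> i j s + \<nu> j * integral {0..s} (\<psi> i j))"
      using eqs s by simp
    also have "\<dots> = (\<Sum>j\<in>Jset I J. \<Sum>i\<in>Iset I. \<psi> i j s + \<nu> j * integral {0..s} (\<psi> i j))"
      by (rule sum.swap)
    also have "\<dots> = (\<Sum>j\<in>Jset I J. (\<Sum>i\<in>Iset I. \<psi> i j s) + \<nu> j * (\<Sum>i\<in>Iset I. integral {0..s} (\<psi> i j)))"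
      by (simp add: sum.distrib sum_distrib_left)
    also have "\<dots> = (\<Sum>j\<in>Jset I J. - z j s - \<nu> j * integral {0..s} (z j))"
      using hsum sumz s by (intro sum.cong) auto
    also have "\<dots> = - (\<Sum>j\<in>Jset I J. z j s) - F s"
      by (simp add: F_def sum_subtractf sum_negf)
    finally show ?thesis by (simp add: sum_subtractf)
  qed
  have Fnn: "0 \<le> F s" if "0 \<le> s" for s
    unfolding F_def
    by (intro sum_nonneg mult_nonneg_nonneg integral_nonneg) (use nu_pos zint hz in \<open>auto simp: less_imp_le\<close>)
  have FT: "F T \<le> W" unfolding Fg
  proof (rule barrier[OF gint T W0])
    fix s assume s: "s \<in> {0..T}" and gt: "integral {0..s} g > W"
    show "g s \<le> 0"
    proof (cases "(\<Sum>j\<in>Jset I J. z j s) = 0")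
      case True
      hence "\<forall>j\<in>Jset I J. z j s = 0"
        using hz s by (subst sum_nonneg_eq_0_iff[symmetric]) auto
      thus ?thesis by (simp add: g_def)
    next
      case False
      have zp: "(\<Sum>j\<in>Jset I J. z j s) > 0"
        using False hz s by (metis (no_types, lifting) atLeastAtMost_iff less_eq_real_def sum_nonneg)
      hence "(\<Sum>i\<in>Iset I. y i s) = 0" using hmin s min0 False by fastforce
      hence "- (\<Sum>j\<in>Jset I J. z j s) - F s = (\<Sum>i\<in>Iset I. w i s)" using key[of s] s by simp
      moreover have "\<bar>\<Sum>k\<in>Iset I. w k s\<bar> \<le> W" using Wsum s by blast
      ultimately have "F s \<le> W" using zp by linarith
      thus ?thesis using gt Fg by simp
    qed
  qed
  have ay: "(\<Sum>i\<in>Iset I. \<bar>y i T\<bar>) = (\<Sum>i\<in>Iset I. y i T)"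
    using hy T by (intro sum.cong) auto
  have az: "(\<Sum>j\<in>Jset I J. \<bar>z j T\<bar>) = (\<Sum>j\<in>Jset I J. z j T)"
    using hz T by (intro sum.cong) auto
  have wT: "\<bar>\<Sum>k\<in>Iset I. w k T\<bar> \<le> W" using Wsum T by simp
  have "(\<Sum>i\<in>Iset I. y i T) + (\<Sum>j\<in>Jset I J. z j T) \<le> 2 * W"
    using min0[OF hmin[rule_format, OF T]] key[OF T] Fnn[OF T] FT wT by auto
  also have "\<dots> \<le> 2 * (1 + T) * W" using mult_nonneg_nonneg[OF T W0] by (simp add: algebra_simps)
  finally show ?thesis using ay az by (simp add: W_def)
qed

lemma card_II[simp]: "card (Iset I) = I" by (simp add: Iset_def)

lemma caseB:
  fixes \<mu> :: "nat \<Rightarrow> nat \<Rightarrow> real" and \<nu> :: "nat \<Rightarrow> real" and \<theta> :: "nat \<Rightarrow> real"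
    and w y z :: "nat \<Rightarrow> real \<Rightarrow> real" and \<psi> :: "nat \<Rightarrow> nat \<Rightarrow> real \<Rightarrow> real"
  assumes nu_pos: "\<And>i. \<nu> i > 0"
    and nuE: "\<And>i j. (i, j) \<in> E \<Longrightarrow> \<mu> i j = \<nu> i"
    and theta0: "\<forall>i\<in>Iset I. \<theta> i = 0"
    and hw: "\<forall>i\<in>Iset I. meas_loc_bdd (w i) \<and> meas_loc_bdd (y i)"
    and hzm: "\<forall>j\<in>Jset I J. meas_loc_bdd (z j)"
    and hpm: "\<forall>i\<in>Iset I. \<forall>j\<in>Jset I J. meas_loc_bdd (\<psi> i j)"
    and hzero: "\<forall>i\<in>Iset I. \<forall>j\<in>Jset I J. (i, j) \<notin> E \<longrightarrow> (\<forall>s\<ge>0. \<psi> i j s = 0)"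
    and heq: "\<forall>i\<in>Iset I. \<forall>t\<ge>0.
              (\<Sum>j\<in>Jset I J. Top (\<mu> i j) (\<psi> i j) t) = w i t - Top (\<theta> i) (y i) t"
    and hsum: "\<forall>j\<in>Jset I J. \<forall>t\<ge>0. (\<Sum>i\<in>Iset I. \<psi> i j t) = - z j t"
    and hy: "\<forall>i\<in>Iset I. \<forall>t\<ge>0. y i t \<ge> 0"
    and hz: "\<forall>j\<in>Jset I J. \<forall>t\<ge>0. z j t \<ge> 0"
    and hmin: "\<forall>t\<ge>0. min (\<Sum>i\<in>Iset I. y i t) (\<Sum>j\<in>Jset I J. z j t) = 0"
    and T: "0 \<le> T"
  shows "(\<Sum>i\<in>Iset I. \<bar>y i T\<bar>) + (\<Sum>j\<in>Jset I J. \<bar>z j T\<bar>)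
     \<le> (1 + (\<Sum>i\<in>Iset I. \<nu> i) * (\<Sum>i\<in>Iset I. 1 / \<nu> i) + (\<Sum>i\<in>Iset I. \<nu> i) * (1 + real I) + (1 + real I))
        * (1 + T) * supnorm (Iset I) w T"
proof -
  define N where "N = (\<Sum>i\<in>Iset I. \<nu> i)"
  define P where "P = (\<Sum>i\<in>Iset I. 1 / \<nu> i)"
  define c where "c = real I"
  define W where "W = supnorm (Iset I) w T"
  have N0: "0 \<le> N" unfolding N_def using nu_pos by (simp add: sum_nonneg less_imp_le)
  have P0: "0 \<le> P" unfolding P_def using nu_pos by (simp add: sum_nonneg less_imp_le)
  have c0: "0 \<le> c" unfolding c_def by simp
  have wm: "\<forall>k\<in>Iset I. meas_loc_bdd (w k)" using hw by auto
  have W0: "0 \<le> W" unfolding W_def using supnorm_facts(3)[OF wm, of 0 T] T by auto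
  have Wsum: "\<And>s. s \<in> {0..T} \<Longrightarrow> \<bar>\<Sum>k\<in>Iset I. w k s\<bar> \<le> W"
    unfolding W_def using supnorm_facts(1)[OF wm] by auto
  have Wi: "\<And>i s. i \<in> Iset I \<Longrightarrow> s \<in> {0..T} \<Longrightarrow> \<bar>w i s\<bar> \<le> W"
    unfolding W_def using supnorm_facts(2)[OF wm] by auto
  have zint: "\<And>j s. j \<in> Jset I J \<Longrightarrow> z j integrable_on {0..s}"
    using hzm mlb_integrable by blast
  have pint: "\<And>i j s. i \<in> Iset I \<Longrightarrow> j \<in> Jset I J \<Longrightarrow> \<psi> i j integrable_on {0..s}"
    using hpm mlb_integrable by blast
  define a where "a = (\<lambda>i r. \<Sum>j\<in>Jset I J. \<psi> i j r)"
  define A where "A = (\<lambda>i s. integral {0..s} (a i))"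
  define ez where "ez = (\<lambda>r. \<Sum>j\<in>Jset I J. z j r)"
  define Z where "Z = (\<lambda>s. integral {0..s} ez)"
  have aint: "\<And>i s. i \<in> Iset I \<Longrightarrow> a i integrable_on {0..s}"
    unfolding a_def by (intro integrable_sum) (use pint in auto)
  have ezint: "\<And>s. ez integrable_on {0..s}"
    unfolding ez_def by (intro integrable_sum) (use zint in auto)
  have Asum: "A i s = (\<Sum>j\<in>Jset I J. integral {0..s} (\<psi> i j))" if "i \<in> Iset I" for i s
    unfolding A_def a_def by (rule integral_sum) (use pint that in auto)
  have eqs: "a i s + \<nu> i * A i s = w i s - y i s"
    if i: "i \<in> Iset I" and s: "0 \<le> s" for i s
  proof -
    have "a i s + \<nu> i * A i s = (\<Sum>j\<in>Jset I J. \<psi> i j s + \<nu> i * integral {0..s} (\<psi> i j))"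
      using Asum[OF i] by (simp add: a_def sum.distrib sum_distrib_left)
    also have "\<dots> = (\<Sum>j\<in>Jset I J. Top (\<mu> i j) (\<psi> i j) s)"
    proof (rule sum.cong)
      fix j assume j: "j \<in> Jset I J"
      have "\<mu> i j * integral {0..s} (\<psi> i j) = \<nu> i * integral {0..s} (\<psi> i j)"
      proof (cases "(i, j) \<in> E")
        case True thus ?thesis using nuE by simp
      next
        case False
        hence "integral {0..s} (\<psi> i j) = integral {0..s} (\<lambda>_. 0)"
          using hzero i j by (intro integral_cong) auto
        thus ?thesis by simp
      qed
      thus "\<psi> i j s + \<nu> i * integral {0..s} (\<psi> i j) = Top (\<mu> i j) (\<psi> i j) s"
        unfolding Top_def using Jint_eq[of "\<psi> i j" s] hpm i j s by auto
    qed simp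
    also have "\<dots> = w i s - y i s" using heq i s theta0 by (simp add: Top_def)
    finally show ?thesis .
  qed
  have sa: "(\<Sum>i\<in>Iset I. a i s) = - ez s" if s: "0 \<le> s" for s
  proof -
    have "(\<Sum>i\<in>Iset I. a i s) = (\<Sum>j\<in>Jset I J. \<Sum>i\<in>Iset I. \<psi> i j s)"
      unfolding a_def by (rule sum.swap)
    also have "\<dots> = (\<Sum>j\<in>Jset I J. - z j s)" using hsum s by (intro sum.cong) auto
    finally show ?thesis by (simp add: ez_def sum_negf)
  qed
  have sA: "(\<Sum>i\<in>Iset I. A i s) = - Z s" if s: "0 \<le> s" for s
  proof -
    have "(\<Sum>i\<in>Iset I. A i s) = integral {0..s} (\<lambda>r. \<Sum>i\<in>Iset I. a i r)"
      unfolding A_def by (rule integral_sum[symmetric]) (use aint in auto)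
    also have "\<dots> = integral {0..s} (\<lambda>r. - ez r)"
      using sa by (intro integral_cong) auto
    also have "\<dots> = - Z s" unfolding Z_def by (rule integral_neg)
    finally show ?thesis .
  qed
  have step1: "A i s \<le> W / \<nu> i" if i: "i \<in> Iset I" and s: "s \<in> {0..T}" for i s
    unfolding A_def
  proof (rule barrier[OF aint[OF i]])
    show "0 \<le> s" using s by simp
    show "0 \<le> W / \<nu> i" using W0 nu_pos[of i] by simp
    fix r assume r: "r \<in> {0..s}" and gt: "integral {0..r} (a i) > W / \<nu> i"
    have "W < \<nu> i * A i r" using gt nu_pos[of i] by (simp add: A_def pos_divide_less_eq mult.commute)
    moreover have "\<bar>w i r\<bar> \<le> W" using Wi[OF i] r s by auto
    moreover have "y i r \<ge> 0" using hy i r by auto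
    moreover have "a i r + \<nu> i * A i r = w i r - y i r" using eqs[OF i] r by auto
    ultimately show "a i r \<le> 0" by linarith
  qed
  have step2: "ez s \<le> (1 + c) * W" if s: "s \<in> {0..T}" for s
  proof (cases "ez s > 0")
    case False thus ?thesis using W0 c0 by (smt (verit) mult_nonneg_nonneg)
  next
    case True
    hence "(\<Sum>i\<in>Iset I. y i s) = 0" using hmin s min0 by (fastforce simp: ez_def)
    hence y0: "\<forall>i\<in>Iset I. y i s = 0"
      using hy s by (subst sum_nonneg_eq_0_iff[symmetric]) auto
    have "- ez s = (\<Sum>i\<in>Iset I. a i s)" using sa s by simp
    also have "\<dots> = (\<Sum>i\<in>Iset I. w i s - \<nu> i * A i s)"
    proof (rule sum.cong)
      fix i assume i: "i \<in> Iset I"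
      show "a i s = w i s - \<nu> i * A i s" using eqs[OF i, of s] y0 i s by auto
    qed simp
    also have "\<dots> = (\<Sum>i\<in>Iset I. w i s) - (\<Sum>i\<in>Iset I. \<nu> i * A i s)" by (rule sum_subtractf)
    finally have e: "- ez s = (\<Sum>i\<in>Iset I. w i s) - (\<Sum>i\<in>Iset I. \<nu> i * A i s)" .
    have "(\<Sum>i\<in>Iset I. \<nu> i * A i s) \<le> (\<Sum>i\<in>Iset I. \<nu> i * (W / \<nu> i))"
      using step1 s nu_pos by (intro sum_mono mult_left_mono) (auto simp: less_imp_le)
    also have "\<dots> = (\<Sum>i\<in>Iset I. W)" using nu_pos by (intro sum.cong) (auto simp: less_imp_neq[symmetric])
    also have "\<dots> = c * W" by (simp add: c_def)
    finally have "(\<Sum>i\<in>Iset I. \<nu> i * A i s) \<le> c * W" .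
    moreover have "\<bar>\<Sum>k\<in>Iset I. w k s\<bar> \<le> W" using Wsum s by blast
    ultimately show ?thesis using e by (simp add: distrib_right abs_le_iff)
  qed
  have ZT: "Z T \<le> (1 + c) * W * T"
  proof -
    have "Z T \<le> integral {0..T} (\<lambda>_. (1 + c) * W)"
      unfolding Z_def by (rule integral_le[OF ezint]) (use step2 in auto)
    thus ?thesis using T by (simp add: mult_ac)
  qed
  have ay: "(\<Sum>i\<in>Iset I. \<bar>y i T\<bar>) = (\<Sum>i\<in>Iset I. y i T)"
    using hy T by (intro sum.cong) auto
  have az: "(\<Sum>j\<in>Jset I J. \<bar>z j T\<bar>) = ez T"
    unfolding ez_def using hz T by (intro sum.cong) auto
  have K1: "(1 + c) * W \<le> (1 + N * P + N * (1 + c) + (1 + c)) * (1 + T) * W"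
  proof -
    have "(1 + N * P + N * (1 + c) + (1 + c)) * (1 + T) * W
       = (1 + c) * W + ((1 + c) * W * T + (1 + T) * W + N * P * ((1 + T) * W) + N * (1 + c) * ((1 + T) * W))"
      by (simp add: algebra_simps)
    moreover have "0 \<le> (1 + c) * W * T + (1 + T) * W + N * P * ((1 + T) * W) + N * (1 + c) * ((1 + T) * W)"
      using N0 P0 c0 W0 T by (intro add_nonneg_nonneg mult_nonneg_nonneg) auto
    ultimately show ?thesis by linarith
  qed
  have main: "(\<Sum>i\<in>Iset I. y i T) + ez T \<le> (1 + N * P + N * (1 + c) + (1 + c)) * (1 + T) * W"
  proof (cases "(\<Sum>i\<in>Iset I. y i T) = 0")
    case True
    thus ?thesis using step2[of T] T K1 by auto
  next
    case False
    hence ez0: "ez T = 0" using min0[OF hmin[rule_format, OF T]] by (simp add: ez_def)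
    define X where "X = (\<Sum>i\<in>Iset I. \<nu> i * (W / \<nu> i - A i T))"
    have ey: "(\<Sum>i\<in>Iset I. y i T) = (\<Sum>i\<in>Iset I. w i T) - (\<Sum>i\<in>Iset I. a i T) - (\<Sum>i\<in>Iset I. \<nu> i * A i T)"
    proof -
      have "(\<Sum>i\<in>Iset I. y i T) = (\<Sum>i\<in>Iset I. w i T - a i T - \<nu> i * A i T)"
        using eqs T by (intro sum.cong) (auto simp: algebra_simps)
      thus ?thesis by (simp add: sum_subtractf)
    qed
    have nuA: "(\<Sum>i\<in>Iset I. \<nu> i * A i T) = c * W - X"
    proof -
      have "X = (\<Sum>i\<in>Iset I. W - \<nu> i * A i T)"
        unfolding X_def using nu_pos by (intro sum.cong) (auto simp: algebra_simps less_imp_neq[symmetric])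
      thus ?thesis by (simp add: sum_subtractf c_def)
    qed
    have "X \<le> (\<Sum>i\<in>Iset I. N * (W / \<nu> i - A i T))"
    unfolding X_def proof (rule sum_mono)
      fix i assume i: "i \<in> Iset I"
      have "\<nu> i \<le> N" unfolding N_def using i nu_pos
        by (intro member_le_sum) (auto simp: less_imp_le)
      moreover have "0 \<le> W / \<nu> i - A i T" using step1[OF i] T by simp
      ultimately show "\<nu> i * (W / \<nu> i - A i T) \<le> N * (W / \<nu> i - A i T)"
        by (rule mult_right_mono)
    qed
    also have "\<dots> = N * (W * P - (\<Sum>i\<in>Iset I. A i T))"
      by (simp add: sum_distrib_left[symmetric] sum_subtractf P_def sum_distrib_left)
    also have "\<dots> = N * (W * P + Z T)" using sA[OF T] by simp
    also have "\<dots> \<le> N * (W * P + (1 + c) * W * T)" using ZT N0 by (intro mult_left_mono) auto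
    finally have Xb: "X \<le> N * (W * P + (1 + c) * W * T)" .
    have "(\<Sum>i\<in>Iset I. y i T) \<le> W + N * (W * P + (1 + c) * W * T)"
      using ey nuA sa[OF T] ez0 Xb Wsum[of T] T mult_nonneg_nonneg[OF c0 W0] by (simp add: abs_le_iff)
    moreover have "W + N * (W * P + (1 + c) * W * T) \<le> (1 + N * P + N * (1 + c) + (1 + c)) * (1 + T) * W"
    proof -
      have "(1 + N * P + N * (1 + c) + (1 + c)) * (1 + T) * W
         = W + N * (W * P + (1 + c) * W * T) + (T * W + N * P * (T * W) + N * (1 + c) * W + (1 + c) * ((1 + T) * W))"
        by (simp add: algebra_simps)
      moreover have "0 \<le> T * W + N * P * (T * W) + N * (1 + c) * W + (1 + c) * ((1 + T) * W)"
        using N0 P0 c0 W0 T by (intro add_nonneg_nonneg mult_nonneg_nonneg) auto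
      ultimately show ?thesis by linarith
    qed
    ultimately show ?thesis using ez0 by simp
  qed
  show ?thesis using main ay az by (simp add: W_def N_def P_def c_def)
qed

lemma glue:
  fixes K W t X :: real
  assumes "1 \<le> K" "0 \<le> W" "0 \<le> t" "X \<le> K * (1 + t) * W"
  shows "X \<le> K * (1 + t) powr K * W"
proof -
  have "(1 + t) powr 1 \<le> (1 + t) powr K" using assms by (intro powr_mono) auto
  hence "1 + t \<le> (1 + t) powr K" using assms by simp
  hence "K * (1 + t) * W \<le> K * (1 + t) powr K * W" using assms
    by (intro mult_right_mono mult_left_mono) auto
  thus ?thesis using assms by linarith
qed

theorem proposition2:
  fixes I J :: nat
    and E :: "(nat \<times> nat) set"
    and \<mu> :: "nat \<Rightarrow> nat \<Rightarrow> real"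
    and \<theta> :: "nat \<Rightarrow> real"
  assumes E_sub: "E \<subseteq> Iset I \<times> Jset I J"
    and mu_pos: "\<And>i j. (i, j) \<in> E \<Longrightarrow> \<mu> i j > 0"
    and mu_zero: "\<And>i j. (i, j) \<notin> E \<Longrightarrow> \<mu> i j = 0"
    and theta_nonneg: "\<And>i. \<theta> i \<ge> 0"
    and tree: "is_tree (Iset I \<union> Jset I J) E"
    and cases: "((\<exists>m :: nat \<Rightarrow> real. \<forall>(i, j)\<in>E. \<mu> i j = m j) \<and> (\<forall>i\<in>Iset I. \<theta> i = 0))
              \<or> ((\<exists>m :: nat \<Rightarrow> real. \<forall>(i, j)\<in>E. \<mu> i j = m i) \<and> (\<forall>i\<in>Iset I. \<theta> i = 0))"
  shows "\<exists>m2 :: real. \<forall>(w :: nat \<Rightarrow> real \<Rightarrow> real) (y :: nat \<Rightarrow> real \<Rightarrow> real)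
            (z :: nat \<Rightarrow> real \<Rightarrow> real) (\<psi> :: nat \<Rightarrow> nat \<Rightarrow> real \<Rightarrow> real).
           (\<forall>i\<in>Iset I. meas_loc_bdd (w i) \<and> meas_loc_bdd (y i))
         \<and> (\<forall>j\<in>Jset I J. meas_loc_bdd (z j))
         \<and> (\<forall>i\<in>Iset I. \<forall>j\<in>Jset I J. meas_loc_bdd (\<psi> i j))
         \<and> (\<forall>i\<in>Iset I. \<forall>j\<in>Jset I J. (i, j) \<notin> E \<longrightarrow> (\<forall>s\<ge>0. \<psi> i j s = 0))
         \<and> (\<forall>i\<in>Iset I. \<forall>t\<ge>0.
              (\<Sum>j\<in>Jset I J. Top (\<mu> i j) (\<psi> i j) t) = w i t - Top (\<theta> i) (y i) t)
         \<and> (\<forall>j\<in>Jset I J. \<forall>t\<ge>0. (\<Sum>i\<in>Iset I. \<psi> i j t) = - z j t)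
         \<and> (\<forall>i\<in>Iset I. \<forall>t\<ge>0. y i t \<ge> 0)
         \<and> (\<forall>j\<in>Jset I J. \<forall>t\<ge>0. z j t \<ge> 0)
         \<and> (\<forall>t\<ge>0. min (\<Sum>i\<in>Iset I. y i t) (\<Sum>j\<in>Jset I J. z j t) = 0)
         \<longrightarrow> (\<forall>t\<ge>0. (\<Sum>i\<in>Iset I. \<bar>y i t\<bar>) + (\<Sum>j\<in>Jset I J. \<bar>z j t\<bar>)
                     \<le> m2 * (1 + t) powr m2 * supnorm (Iset I) w t)"
  using cases
proof
  assume a: "(\<exists>m :: nat \<Rightarrow> real. \<forall>(i, j)\<in>E. \<mu> i j = m j) \<and> (\<forall>i\<in>Iset I. \<theta> i = 0)"
  then obtain m where m: "\<forall>(i, j)\<in>E. \<mu> i j = m j" and th: "\<forall>i\<in>Iset I. \<theta> i = 0" by blast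
  define \<nu> where "\<nu> = (\<lambda>j. if \<exists>i. (i, j) \<in> E then m j else 1)"
  have nu_pos: "\<And>j. \<nu> j > 0"
    unfolding \<nu>_def using m mu_pos by fastforce
  have nuE: "\<And>i j. (i, j) \<in> E \<Longrightarrow> \<mu> i j = \<nu> j"
    unfolding \<nu>_def using m by auto
  show ?thesis
  proof (rule exI[of _ 2], intro allI impI)
    fix w y z :: "nat \<Rightarrow> real \<Rightarrow> real" and \<psi> :: "nat \<Rightarrow> nat \<Rightarrow> real \<Rightarrow> real"
    assume H: "(\<forall>i\<in>Iset I. meas_loc_bdd (w i) \<and> meas_loc_bdd (y i))
         \<and> (\<forall>j\<in>Jset I J. meas_loc_bdd (z j))
         \<and> (\<forall>i\<in>Iset I. \<forall>j\<in>Jset I J. meas_loc_bdd (\<psi> i j))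
         \<and> (\<forall>i\<in>Iset I. \<forall>j\<in>Jset I J. (i, j) \<notin> E \<longrightarrow> (\<forall>s\<ge>0. \<psi> i j s = 0))
         \<and> (\<forall>i\<in>Iset I. \<forall>t\<ge>0.
              (\<Sum>j\<in>Jset I J. Top (\<mu> i j) (\<psi> i j) t) = w i t - Top (\<theta> i) (y i) t)
         \<and> (\<forall>j\<in>Jset I J. \<forall>t\<ge>0. (\<Sum>i\<in>Iset I. \<psi> i j t) = - z j t)
         \<and> (\<forall>i\<in>Iset I. \<forall>t\<ge>0. y i t \<ge> 0)
         \<and> (\<forall>j\<in>Jset I J. \<forall>t\<ge>0. z j t \<ge> 0)
         \<and> (\<forall>t\<ge>0. min (\<Sum>i\<in>Iset I. y i t) (\<Sum>j\<in>Jset I J. z j t) = 0)"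
    fix t :: real assume t: "0 \<le> t"
      have wm: "\<forall>k\<in>Iset I. meas_loc_bdd (w k)" using H by auto
      have W0: "0 \<le> supnorm (Iset I) w t" using supnorm_facts(3)[OF wm, of 0 t] t by auto
      have "(\<Sum>i\<in>Iset I. \<bar>y i t\<bar>) + (\<Sum>j\<in>Jset I J. \<bar>z j t\<bar>) \<le> 2 * (1 + t) * supnorm (Iset I) w t"
        using H by (intro caseA[where \<nu>=\<nu> and \<mu>=\<mu> and E=E and \<theta>=\<theta> and \<psi>=\<psi>]) (use nu_pos nuE th t in auto)
      thus "(\<Sum>i\<in>Iset I. \<bar>y i t\<bar>) + (\<Sum>j\<in>Jset I J. \<bar>z j t\<bar>) \<le> 2 * (1 + t) powr 2 * supnorm (Iset I) w t"
        using glue[of 2] W0 t by simp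
  qed
next
  assume b: "(\<exists>m :: nat \<Rightarrow> real. \<forall>(i, j)\<in>E. \<mu> i j = m i) \<and> (\<forall>i\<in>Iset I. \<theta> i = 0)"
  then obtain m where m: "\<forall>(i, j)\<in>E. \<mu> i j = m i" and th: "\<forall>i\<in>Iset I. \<theta> i = 0" by blast
  define \<nu> where "\<nu> = (\<lambda>i. if \<exists>j. (i, j) \<in> E then m i else 1)"
  have nu_pos: "\<And>i. \<nu> i > 0"
    unfolding \<nu>_def using m mu_pos by fastforce
  have nuE: "\<And>i j. (i, j) \<in> E \<Longrightarrow> \<mu> i j = \<nu> i"
    unfolding \<nu>_def using m by auto
  define K where "K = (1 + (\<Sum>i\<in>Iset I. \<nu> i) * (\<Sum>i\<in>Iset I. 1 / \<nu> i) + (\<Sum>i\<in>Iset I. \<nu> i) * (1 + real I) + (1 + real I))"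
  have K1: "1 \<le> K" unfolding K_def using nu_pos
    by (smt (verit) mult_nonneg_nonneg of_nat_0_le_iff sum_nonneg less_imp_le divide_nonneg_pos zero_less_one)
  show ?thesis
  proof (rule exI[of _ K], intro allI impI)
    fix w y z :: "nat \<Rightarrow> real \<Rightarrow> real" and \<psi> :: "nat \<Rightarrow> nat \<Rightarrow> real \<Rightarrow> real"
    assume H: "(\<forall>i\<in>Iset I. meas_loc_bdd (w i) \<and> meas_loc_bdd (y i))
         \<and> (\<forall>j\<in>Jset I J. meas_loc_bdd (z j))
         \<and> (\<forall>i\<in>Iset I. \<forall>j\<in>Jset I J. meas_loc_bdd (\<psi> i j))
         \<and> (\<forall>i\<in>Iset I. \<forall>j\<in>Jset I J. (i, j) \<notin> E \<longrightarrow> (\<forall>s\<ge>0. \<psi> i j s = 0))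
         \<and> (\<forall>i\<in>Iset I. \<forall>t\<ge>0.
              (\<Sum>j\<in>Jset I J. Top (\<mu> i j) (\<psi> i j) t) = w i t - Top (\<theta> i) (y i) t)
         \<and> (\<forall>j\<in>Jset I J. \<forall>t\<ge>0. (\<Sum>i\<in>Iset I. \<psi> i j t) = - z j t)
         \<and> (\<forall>i\<in>Iset I. \<forall>t\<ge>0. y i t \<ge> 0)
         \<and> (\<forall>j\<in>Jset I J. \<forall>t\<ge>0. z j t \<ge> 0)
         \<and> (\<forall>t\<ge>0. min (\<Sum>i\<in>Iset I. y i t) (\<Sum>j\<in>Jset I J. z j t) = 0)"
    fix t :: real assume t: "0 \<le> t"
      have wm: "\<forall>k\<in>Iset I. meas_loc_bdd (w k)" using H by auto
      have W0: "0 \<le> supnorm (Iset I) w t" using supnorm_facts(3)[OF wm, of 0 t] t by auto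
      have "(\<Sum>i\<in>Iset I. \<bar>y i t\<bar>) + (\<Sum>j\<in>Jset I J. \<bar>z j t\<bar>) \<le> K * (1 + t) * supnorm (Iset I) w t"
        unfolding K_def
        using H by (intro caseB[where \<nu>=\<nu> and \<mu>=\<mu> and E=E and \<theta>=\<theta> and \<psi>=\<psi>]) (use nu_pos nuE th t in auto)
      thus "(\<Sum>i\<in>Iset I. \<bar>y i t\<bar>) + (\<Sum>j\<in>Jset I J. \<bar>z j t\<bar>) \<le> K * (1 + t) powr K * supnorm (Iset I) w t"
        using glue[OF K1 W0 t] by simp
  qed
qed

end
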